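(* For $\alpha>0$ and $\lambda>0$ let $\psi(\alpha,\lambda)=e^{-\alpha\lambda}\sum_{k=0}^{\infty}\left(\frac{\lambda^k}{k!}\right)^{\alpha}$. Then for every $0<\alpha<1$ the function $\lambda\mapsto\psi(\alpha,\lambda)$ is strictly increasing on $(0,+\infty)$, while for every $\alpha>1$ the function $\lambda\mapsto\psi(\alpha,\lambda)$ is strictly decreasing on $(0,+\infty)$. Consequently, for every $\alpha>0$, $\alpha\ne1$, the R\'enyi entropy $H_R^{\alpha}(\lambda)=\frac{1}{1-\alpha}\log\psi(\alpha,\lambda)$ of the Poisson distribution with parameter $\lambda$ is strictly increasing in $\lambda\in(0,+\infty)$.
   Context: $\psi(\alpha,\lambda)=\sum_{k\ge0}p_k(\lambda)^\alpha$ where $p_k(\lambda)=\frac{\lambda^k}{k!}e^{-\lambda}$ are the Poisson probabilities. The R\'enyi entropy of order $\alpha>0,\alpha\ne1$, of a discrete distribution $(p_i)$ is $\frac{1}{1-\alpha}\log\sum_i p_i^\alpha$. *)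

theory Defs
  imports "HOL-Analysis.Analysis"
begin

definition poisson_p :: "real \<Rightarrow> nat \<Rightarrow> real" where
  "poisson_p l k = l ^ k / fact k * exp (- l)"

definition psi :: "real \<Rightarrow> real \<Rightarrow> real" where
  "psi a l = exp (- a * l) * (\<Sum>k. (l ^ k / fact k) powr a)"

definition renyi_poisson :: "real \<Rightarrow> real \<Rightarrow> real" where
  "renyi_poisson a l = 1 / (1 - a) * ln (\<Sum>k. (poisson_p l k) powr a)"

end

theory Submission
  imports Defs
begin


lemma jensen_sub:
  assumes "finite I" "p \<ge> 1" "\<And>i. i\<in>I \<Longrightarrow> w i \<ge> 0" "\<And>i. i\<in>I \<Longrightarrow> x i > (0::real)"
    "sum w I \<le> 1"
  shows "(\<Sum>i\<in>I. w i * x i) powr p \<le> (\<Sum>i\<in>I. w i * x i powr p)"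
proof -
  define W where "W = sum w I"
  have W0: "W \<ge> 0" unfolding W_def using assms(3) by (simp add: sum_nonneg)
  show ?thesis
  proof (cases "W = 0")
    case True
    then have "\<forall>i\<in>I. w i = 0" using sum_nonneg_eq_0_iff[OF assms(1), of w] assms(3) unfolding W_def by simp
    then show ?thesis by simp
  next
    case False
    with W0 have Wp: "W > 0" by simp
    then have ne: "I \<noteq> {}" using W_def by auto
    have "(\<lambda>x. x powr p) (\<Sum>i\<in>I. (w i / W) *\<^sub>R x i) \<le> (\<Sum>i\<in>I. (w i / W) * (\<lambda>x. x powr p) (x i))"
      apply (rule convex_on_sum[OF assms(1) ne powr_convex[OF assms(2)]])
      using assms Wp by (auto simp: W_def sum_divide_distrib[symmetric])
    then have "((\<Sum>i\<in>I. w i * x i) / W) powr p \<le> (\<Sum>i\<in>I. w i * x i powr p) / W"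
      by (simp add: sum_divide_distrib)
    moreover have S0: "(\<Sum>i\<in>I. w i * x i) \<ge> 0"
      using assms by (intro sum_nonneg mult_nonneg_nonneg) (auto intro: less_imp_le)
    ultimately have "(\<Sum>i\<in>I. w i * x i) powr p / W powr p \<le> (\<Sum>i\<in>I. w i * x i powr p) / W"
      using W0 by (simp add: powr_divide)
    then have "(\<Sum>i\<in>I. w i * x i) powr p \<le> W powr p / W * (\<Sum>i\<in>I. w i * x i powr p)"
      using Wp by (simp add: field_simps)
    also have "W powr p / W = W powr (p - 1)" using Wp by (simp add: powr_diff)
    also have "W powr (p - 1) * (\<Sum>i\<in>I. w i * x i powr p) \<le> 1 * (\<Sum>i\<in>I. w i * x i powr p)"
      apply (rule mult_right_mono)
      using assms W0 by (auto simp: W_def intro!: powr_le1 sum_nonneg)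
    finally show ?thesis by simp
  qed
qed

lemma jensen_sub_concave:
  assumes "finite I" "0 < a" "a \<le> 1" "\<And>i. i\<in>I \<Longrightarrow> w i \<ge> 0" "\<And>i. i\<in>I \<Longrightarrow> x i > (0::real)"
    "sum w I \<le> 1"
  shows "(\<Sum>i\<in>I. w i * x i powr a) \<le> (\<Sum>i\<in>I. w i * x i) powr a"
proof -
  have "(\<Sum>i\<in>I. w i * x i powr a) powr (1/a) \<le> (\<Sum>i\<in>I. w i * (x i powr a) powr (1/a))"
  proof (rule jensen_sub[OF assms(1) _ assms(4) _ assms(6)])
    show "1 \<le> 1/a" using assms(2,3) by simp
    fix i assume "i \<in> I"
    then have "x i > 0" using assms(5) by auto
    then show "x i powr a > 0" by simp
  qed
  also have "\<dots> = (\<Sum>i\<in>I. w i * x i)"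
  proof (intro sum.cong refl)
    fix i assume "i \<in> I"
    then have "x i > 0" using assms by auto
    then show "w i * (x i powr a) powr (1/a) = w i * x i" using assms(2) by (simp add: powr_powr)
  qed
  finally have h: "(\<Sum>i\<in>I. w i * x i powr a) powr (1/a) \<le> (\<Sum>i\<in>I. w i * x i)" .
  have A0: "(\<Sum>i\<in>I. w i * x i powr a) \<ge> 0" using assms by (intro sum_nonneg) auto
  have "(\<Sum>i\<in>I. w i * x i powr a) = ((\<Sum>i\<in>I. w i * x i powr a) powr (1/a)) powr a"
    using A0 assms(2) by (simp add: powr_powr)
  also have "\<dots> \<le> (\<Sum>i\<in>I. w i * x i) powr a"
    by (rule powr_mono2) (use h assms(2) in auto)
  finally show ?thesis .
qed

lemma pp_pos: "l > 0 \<Longrightarrow> poisson_p l k > 0"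
  unfolding poisson_p_def by simp

lemma pp_Suc: "poisson_p l (Suc n) = poisson_p l n * (l / real (Suc n))"
  unfolding poisson_p_def by (simp add: field_simps)

lemma summable_powr_ratio:
  fixes f :: "nat \<Rightarrow> real"
  assumes "l > 0" "a > 0" "\<And>n. f n \<ge> 0" "\<And>n. f (Suc n) = f n * (l / real (Suc n))"
  shows "summable (\<lambda>k. f k powr a)"
proof -
  have "((\<lambda>n. l / real (Suc n)) \<longlongrightarrow> 0) sequentially"
    using LIMSEQ_Suc[OF lim_const_over_n[of l]] by simp
  then have "((\<lambda>n. (l / real (Suc n)) powr a) \<longlongrightarrow> 0) sequentially"
    using assms by (intro tendsto_zero_powrI[of "\<lambda>n. l / real (Suc n)" sequentially "\<lambda>_. a" a]) auto
  then have "eventually (\<lambda>n. (l / real (Suc n)) powr a < 1/2) sequentially"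
    by (rule order_tendstoD) simp
  then obtain N where N: "\<And>n. n \<ge> N \<Longrightarrow> (l / real (Suc n)) powr a < 1/2"
    by (auto simp: eventually_sequentially)
  show ?thesis
  proof (rule summable_ratio_test[of "1/2" N])
    fix n assume "n \<ge> N"
    have "f (Suc n) powr a = (f n * (l / real (Suc n))) powr a"
      using assms(4) by simp
    also have "\<dots> = f n powr a * (l / real (Suc n)) powr a"
      using assms(1,3) powr_mult[of "f n" "l / real (Suc n)" a] by simp
    also have "\<dots> \<le> f n powr a * (1/2)"
      using N[OF \<open>n \<ge> N\<close>] by (intro mult_left_mono) auto
    finally show "norm (f (Suc n) powr a) \<le> 1/2 * norm (f n powr a)" by simp
  qed simp
qed

lemma summable_pp: "l > 0 \<Longrightarrow> a > 0 \<Longrightarrow> summable (\<lambda>k. poisson_p l k powr a)"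
  by (rule summable_powr_ratio) (auto simp: pp_Suc less_imp_le pp_pos)

lemma summable_psi_terms:
  fixes l a :: real
  assumes "l > 0" "a > 0" shows "summable (\<lambda>k. (l ^ k / fact k) powr a)"
proof (rule summable_powr_ratio[OF assms])
  fix n
  show "0 \<le> l ^ n / fact n" using assms by simp
  show "l ^ Suc n / fact (Suc n) = l ^ n / fact n * (l / real (Suc n))"
    by (simp add: field_simps)
qed

lemma psi_eq: assumes "l > 0" "a > 0" shows "psi a l = (\<Sum>k. poisson_p l k powr a)"
proof -
  have "(\<Sum>k. poisson_p l k powr a) = (\<Sum>k. exp (- a * l) * (l ^ k / fact k) powr a)"
  proof (intro suminf_cong)
    fix k
    have e: "poisson_p l k = (l ^ k / fact k) * exp (- l)" unfolding poisson_p_def by simp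
    have "poisson_p l k powr a = (l ^ k / fact k) powr a * exp (- l) powr a"
      unfolding e using assms powr_mult[of "l ^ k / fact k" "exp (- l)" a] by simp
    then show "poisson_p l k powr a = exp (- a * l) * (l ^ k / fact k) powr a"
      by (simp add: exp_powr_real mult_ac)
  qed
  also have "\<dots> = exp (- a * l) * (\<Sum>k. (l ^ k / fact k) powr a)"
    by (rule suminf_mult[OF summable_psi_terms[OF assms]])
  finally show ?thesis unfolding psi_def by simp
qed

lemma pp_sums: "(\<lambda>k. poisson_p m k) sums 1"
proof -
  have "(\<lambda>n. m ^ n / fact n * exp (- m)) sums (exp m * exp (- m))"
    using exp_converges[of m] by (intro sums_mult2) (simp add: divide_inverse mult_ac)
  then show ?thesis unfolding poisson_p_def by (simp add: exp_minus)
qed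

lemma pp_conv: "poisson_p (l + m) k = (\<Sum>j\<le>k. poisson_p m j * poisson_p l (k - j))"
proof -
  have "poisson_p (l + m) k = (\<Sum>j\<le>k. of_nat (k choose j) * m ^ j * l ^ (k - j)) / fact k * exp (- (l+m))"
    unfolding poisson_p_def using binomial_ring[of m l k] by (simp add: add.commute)
  also have "\<dots> = (\<Sum>j\<le>k. of_nat (k choose j) * m ^ j * l ^ (k - j) / fact k * exp (- (l+m)))"
    by (simp add: sum_divide_distrib sum_distrib_right)
  also have "\<dots> = (\<Sum>j\<le>k. poisson_p m j * poisson_p l (k - j))"
  proof (intro sum.cong refl)
    fix j assume "j \<in> {..k}"
    then have "j \<le> k" by simp
    then show "of_nat (k choose j) * m ^ j * l ^ (k - j) / fact k * exp (- (l+m)) = poisson_p m j * poisson_p l (k - j)"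
      unfolding poisson_p_def by (simp add: binomial_fact exp_diff exp_minus field_simps)
  qed
  finally show ?thesis .
qed


lemma suminf_strict_less:
  fixes f g :: "nat \<Rightarrow> real"
  assumes "summable f" "summable g" "\<And>n. f n \<le> g n" "f k < g k"
  shows "suminf f < suminf g"
proof -
  have "0 < (\<Sum>n. g n - f n)"
    using suminf_pos_iff[of "\<lambda>n. g n - f n"] summable_diff[OF assms(2,1)] assms(3,4) by force
  also have "\<dots> = suminf g - suminf f" using suminf_diff[OF assms(2,1)] by simp
  finally show ?thesis by simp
qed

lemma main_common:
  assumes "0 < a" "0 < l" "l < m"
  defines "r \<equiv> poisson_p (m - l)"
  shows "\<And>k. poisson_p m k = (\<Sum>j\<le>k. r j * poisson_p l (k - j))"
    and "\<And>k. sum r {..k} \<le> 1"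
    and "\<And>j. r j \<ge> 0"
    and "0 < r 0" "r 0 < 1"
    and "(\<lambda>k. \<Sum>j\<le>k. r j * poisson_p l (k - j) powr a) sums (\<Sum>k. poisson_p l k powr a)"
proof -
  have m: "m = l + (m - l)" by simp
  show "poisson_p m k = (\<Sum>j\<le>k. r j * poisson_p l (k - j))" for k
    unfolding r_def by (subst m) (rule pp_conv)
  have rs: "r sums 1" unfolding r_def by (rule pp_sums)
  show rpos: "r j \<ge> 0" for j unfolding r_def using assms pp_pos[of "m - l" j] by simp
  show "sum r {..k} \<le> 1" for k
    using sum_le_suminf[OF sums_summable[OF rs], of "{..k}"] sums_unique[OF rs] rpos by simp
  show "0 < r 0" "r 0 < 1" unfolding r_def poisson_p_def using assms by auto
  have "(\<lambda>k. \<Sum>j\<le>k. r j * poisson_p l (k - j) powr a) sums ((\<Sum>k. r k) * (\<Sum>k. poisson_p l k powr a))"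
  proof (rule Cauchy_product_sums)
    show "summable (\<lambda>k. norm (r k))" using sums_summable[OF rs] rpos by simp
    show "summable (\<lambda>k. norm (poisson_p l k powr a))" using summable_pp[OF assms(2,1)] by simp
  qed
  then show "(\<lambda>k. \<Sum>j\<le>k. r j * poisson_p l (k - j) powr a) sums (\<Sum>k. poisson_p l k powr a)"
    using sums_unique[OF rs] by simp
qed

lemma main_dec:
  assumes "1 < a" "0 < l" "l < m"
  shows "(\<Sum>k. poisson_p m k powr a) < (\<Sum>k. poisson_p l k powr a)"
proof -
  define r where "r = poisson_p (m - l)"
  note c = main_common[of a l m, folded r_def]
  have a0: "0 < a" using assms by simp
  define g where "g k = (\<Sum>j\<le>k. r j * poisson_p l (k - j) powr a)" for k
  have gs: "g sums (\<Sum>k. poisson_p l k powr a)" unfolding g_def using c(6) a0 assms by blast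
  have le: "poisson_p m k powr a \<le> g k" for k
  proof -
    have "poisson_p m k powr a = (\<Sum>j\<le>k. r j * poisson_p l (k - j)) powr a"
      using c(1) a0 assms by simp
    also have "\<dots> \<le> g k" unfolding g_def
      by (rule jensen_sub) (use c(2,3) a0 assms pp_pos in auto)
    finally show ?thesis .
  qed
  have lt: "poisson_p m 0 powr a < g 0"
  proof -
    have "poisson_p m 0 powr a = (r 0 * poisson_p l 0) powr a"
      using c(1)[of 0] a0 assms by simp
    also have "\<dots> = r 0 powr a * poisson_p l 0 powr a"
      using c(3)[of 0] pp_pos[OF assms(2), of 0] powr_mult by (simp add: less_imp_le)
    also have "\<dots> < r 0 powr 1 * poisson_p l 0 powr a"
      using c(4,5) a0 assms pp_pos[OF assms(2), of 0]
      by (intro mult_strict_right_mono powr_less_mono') auto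
    also have "\<dots> = g 0" unfolding g_def using c(4) a0 assms by simp
    finally show ?thesis .
  qed
  have "(\<Sum>k. poisson_p m k powr a) < suminf g"
    by (rule suminf_strict_less[OF summable_pp _ le lt]) (use assms gs sums_summable in auto)
  then show ?thesis using sums_unique[OF gs] by simp
qed

lemma main_inc:
  assumes "0 < a" "a < 1" "0 < l" "l < m"
  shows "(\<Sum>k. poisson_p l k powr a) < (\<Sum>k. poisson_p m k powr a)"
proof -
  define r where "r = poisson_p (m - l)"
  note c = main_common[of a l m, folded r_def]
  define g where "g k = (\<Sum>j\<le>k. r j * poisson_p l (k - j) powr a)" for k
  have gs: "g sums (\<Sum>k. poisson_p l k powr a)" unfolding g_def using c(6) assms by blast
  have le: "g k \<le> poisson_p m k powr a" for k
  proof -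
    have "g k \<le> (\<Sum>j\<le>k. r j * poisson_p l (k - j)) powr a" unfolding g_def
      by (rule jensen_sub_concave) (use c(2,3) assms pp_pos in auto)
    also have "\<dots> = poisson_p m k powr a"
      using c(1) assms by simp
    finally show ?thesis .
  qed
  have lt: "g 0 < poisson_p m 0 powr a"
  proof -
    have "g 0 = r 0 powr 1 * poisson_p l 0 powr a" unfolding g_def using c(4) assms by simp
    also have "\<dots> < r 0 powr a * poisson_p l 0 powr a"
      using c(4,5) assms pp_pos[OF assms(3), of 0]
      by (intro mult_strict_right_mono powr_less_mono') auto
    also have "\<dots> = (r 0 * poisson_p l 0) powr a"
      using c(3)[of 0] pp_pos[OF assms(3), of 0] powr_mult by (simp add: less_imp_le)
    also have "\<dots> = poisson_p m 0 powr a"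
      using c(1)[of 0] assms by simp
    finally show ?thesis .
  qed
  have "suminf g < (\<Sum>k. poisson_p m k powr a)"
    by (rule suminf_strict_less[OF _ summable_pp le lt]) (use assms gs sums_summable in auto)
  then show ?thesis using sums_unique[OF gs] by simp
qed


lemma S_pos: "0 < l \<Longrightarrow> 0 < a \<Longrightarrow> 0 < (\<Sum>k. poisson_p l k powr a)"
proof (rule suminf_pos[OF summable_pp])
  fix n assume "0 < l" "0 < a"
  then show "0 < poisson_p l n powr a" using pp_pos[of l n] by simp
qed

theorem theorem2:
  shows "(\<forall>a::real. 0 < a \<and> a < 1 \<longrightarrow> strict_mono_on {0<..} (psi a))
       \<and> (\<forall>a::real. 1 < a \<longrightarrow> strict_antimono_on {0<..} (psi a))
       \<and> (\<forall>a::real. 0 < a \<and> a \<noteq> 1 \<longrightarrow> strict_mono_on {0<..} (renyi_poisson a))"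
proof (intro conjI allI impI)
  fix a :: real assume "0 < a \<and> a < 1"
  then show "strict_mono_on {0<..} (psi a)"
    by (intro monotone_onI) (simp add: psi_eq main_inc)
next
  fix a :: real assume "1 < a"
  then show "strict_antimono_on {0<..} (psi a)"
    by (intro monotone_onI) (simp add: psi_eq main_dec)
next
  fix a :: real assume a: "0 < a \<and> a \<noteq> 1"
  show "strict_mono_on {0<..} (renyi_poisson a)"
  proof (intro monotone_onI)
    fix l m :: real assume lm: "l \<in> {0<..}" "m \<in> {0<..}" "l < m"
    have pl: "0 < (\<Sum>k. poisson_p l k powr a)" and pm: "0 < (\<Sum>k. poisson_p m k powr a)"
      using lm a by (auto intro: S_pos)
    show "renyi_poisson a l < renyi_poisson a m"
    proof (cases "a < 1")
      case True
      then have "ln (\<Sum>k. poisson_p l k powr a) < ln (\<Sum>k. poisson_p m k powr a)"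
        using main_inc[of a l m] a lm pl pm by simp
      then show ?thesis unfolding renyi_poisson_def using True by (simp add: divide_strict_right_mono)
    next
      case False
      then have "1 < a" using a by simp
      then have "ln (\<Sum>k. poisson_p m k powr a) < ln (\<Sum>k. poisson_p l k powr a)"
        using main_dec[of a l m] a lm pl pm by simp
      then show ?thesis unfolding renyi_poisson_def using \<open>1 < a\<close>
        by (simp add: divide_strict_right_mono_neg)
    qed
  qed
qed

end
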